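(* Let $H$ be a connected triangle-free graph and $G=L(H)$. Then $G$ is localizable if and only if $H$ is an equimatchable bipartite graph.
   Context: $L(H)$ is the line graph of $H$. A clique is strong if it intersects every maximal independent set; a graph is localizable if its vertex set admits a partition into strong cliques. A graph is equimatchable if all its maximal matchings have the same size. *)

theory Defs
  imports Main
begin

definition simple_graph :: "'a set \<Rightarrow> 'a set set \<Rightarrow> bool" where
  "simple_graph V E \<longleftrightarrow> finite V \<and>
     (\<forall>e\<in>E. \<exists>u v. u \<in> V \<and> v \<in> V \<and> u \<noteq> v \<and> e = {u, v})"

definition line_graph_edges :: "'a set set \<Rightarrow> 'a set set set" where
  "line_graph_edges E = {{e, f} | e f. e \<in> E \<and> f \<in> E \<and> e \<noteq> f \<and> e \<inter> f \<noteq> {}}"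

definition connected_graph :: "'a set \<Rightarrow> 'a set set \<Rightarrow> bool" where
  "connected_graph V E \<longleftrightarrow> V \<noteq> {} \<and>
     (\<forall>u\<in>V. \<forall>v\<in>V. (\<lambda>x y. {x, y} \<in> E)\<^sup>*\<^sup>* u v)"

definition triangle_free :: "'a set \<Rightarrow> 'a set set \<Rightarrow> bool" where
  "triangle_free V E \<longleftrightarrow>
     \<not> (\<exists>u\<in>V. \<exists>v\<in>V. \<exists>w\<in>V. {u, v} \<in> E \<and> {v, w} \<in> E \<and> {u, w} \<in> E)"

definition clique :: "'a set \<Rightarrow> 'a set set \<Rightarrow> 'a set \<Rightarrow> bool" where
  "clique V E C \<longleftrightarrow> C \<subseteq> V \<and> (\<forall>u\<in>C. \<forall>v\<in>C. u \<noteq> v \<longrightarrow> {u, v} \<in> E)"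

definition independent_set :: "'a set \<Rightarrow> 'a set set \<Rightarrow> 'a set \<Rightarrow> bool" where
  "independent_set V E S \<longleftrightarrow> S \<subseteq> V \<and> (\<forall>u\<in>S. \<forall>v\<in>S. {u, v} \<notin> E)"

definition maximal_independent_set :: "'a set \<Rightarrow> 'a set set \<Rightarrow> 'a set \<Rightarrow> bool" where
  "maximal_independent_set V E S \<longleftrightarrow> independent_set V E S \<and>
     (\<forall>T. independent_set V E T \<and> S \<subseteq> T \<longrightarrow> T = S)"

definition strong_clique :: "'a set \<Rightarrow> 'a set set \<Rightarrow> 'a set \<Rightarrow> bool" where
  "strong_clique V E C \<longleftrightarrow> clique V E C \<and>
     (\<forall>S. maximal_independent_set V E S \<longrightarrow> C \<inter> S \<noteq> {})"

definition localizable :: "'a set \<Rightarrow> 'a set set \<Rightarrow> bool" where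
  "localizable V E \<longleftrightarrow> (\<exists>P. \<Union>P = V \<and> {} \<notin> P \<and>
     (\<forall>A\<in>P. \<forall>B\<in>P. A \<noteq> B \<longrightarrow> A \<inter> B = {}) \<and>
     (\<forall>C\<in>P. strong_clique V E C))"

definition matching :: "'a set set \<Rightarrow> 'a set set \<Rightarrow> bool" where
  "matching E M \<longleftrightarrow> M \<subseteq> E \<and> (\<forall>e\<in>M. \<forall>f\<in>M. e \<noteq> f \<longrightarrow> e \<inter> f = {})"

definition maximal_matching :: "'a set set \<Rightarrow> 'a set set \<Rightarrow> bool" where
  "maximal_matching E M \<longleftrightarrow> matching E M \<and>
     (\<forall>M'. matching E M' \<and> M \<subseteq> M' \<longrightarrow> M' = M)"

definition equimatchable :: "'a set set \<Rightarrow> bool" where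
  "equimatchable E \<longleftrightarrow> (\<forall>M M'. maximal_matching E M \<and> maximal_matching E M'
     \<longrightarrow> card M = card M')"

definition bipartite :: "'a set \<Rightarrow> 'a set set \<Rightarrow> bool" where
  "bipartite V E \<longleftrightarrow> (\<exists>X Y. X \<union> Y = V \<and> X \<inter> Y = {} \<and>
     (\<forall>e\<in>E. \<exists>x\<in>X. \<exists>y\<in>Y. e = {x, y}))"

end

theory Submission
  imports Defs
begin


definition cover :: "'a set set \<Rightarrow> 'a set \<Rightarrow> bool" where
  "cover E C \<longleftrightarrow> (\<forall>e\<in>E. e \<inter> C \<noteq> {})"

definition bip :: "'a set \<Rightarrow> 'a set set \<Rightarrow> bool" where
  "bip X E \<longleftrightarrow> (\<forall>e\<in>E. \<exists>a b. e = {a,b} \<and> a \<in> X \<and> b \<notin> X)"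

lemma duality:
  assumes "matching E M" "finite C" "\<forall>e\<in>M. e \<inter> C \<noteq> {}"
  shows "card M \<le> card C"
proof -
  define f where "f e = (SOME y. y \<in> e \<inter> C)" for e
  have f: "f e \<in> e \<inter> C" if "e \<in> M" for e
    unfolding f_def using assms(3) that by (metis all_not_in_conv someI_ex)
  have "inj_on f M"
  proof (rule inj_onI)
    fix x y assume "x \<in> M" "y \<in> M" "f x = f y"
    then have "f x \<in> x \<inter> y" using f[of x] f[of y] by simp
    then have "x \<inter> y \<noteq> {}" by blast
    then show "x = y" using `x \<in> M` `y \<in> M` assms(1) unfolding matching_def by metis
  qed
  moreover have "f ` M \<subseteq> C" using f by blast
  ultimately show ?thesis using assms(2) card_inj_on_le by blast
qed

lemma matching_finite: "finite E \<Longrightarrow> matching E M \<Longrightarrow> finite M"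
  unfolding matching_def using finite_subset by blast

lemma max_matching_exists:
  assumes "finite E"
  shows "\<exists>Mx. matching E Mx \<and> (\<forall>M. matching E M \<longrightarrow> card M \<le> card Mx)"
proof -
  have "matching E {}" unfolding matching_def by auto
  moreover have "\<forall>M. matching E M \<longrightarrow> card M < Suc (card E)"
    using assms unfolding matching_def by (simp add: card_mono le_imp_less_Suc)
  ultimately show ?thesis using ex_has_greatest_nat[of "matching E" "{}" card "Suc (card E)"] by blast
qed

lemma extend_maximal:
  assumes "finite E" "matching E M"
  shows "\<exists>M'. maximal_matching E M' \<and> M \<subseteq> M'"
proof -
  have "\<forall>N. matching E N \<and> M \<subseteq> N \<longrightarrow> card N < Suc (card E)"
    using assms unfolding matching_def by (simp add: card_mono le_imp_less_Suc)
  then obtain M' where M': "matching E M'" "M \<subseteq> M'"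
    "\<forall>N. matching E N \<and> M \<subseteq> N \<longrightarrow> card N \<le> card M'"
    using ex_has_greatest_nat[of "\<lambda>N. matching E N \<and> M \<subseteq> N" M card "Suc (card E)"] assms(2) by blast
  have "maximal_matching E M'"
    unfolding maximal_matching_def
  proof (intro conjI allI impI)
    fix N assume N: "matching E N \<and> M' \<subseteq> N"
    then have "card N \<le> card M'" using M' by blast
    moreover have "finite N" using N assms(1) matching_finite by blast
    ultimately show "N = M'" using N by (metis card_seteq)
  qed (use M' in auto)
  then show ?thesis using M' by blast
qed



lemma case1:
  assumes fin: "finite E" and bp: "bip X E" and uv: "{u,v} \<in> E" "u \<noteq> v"
    and S: "{e\<in>E. u \<in> e} = {{u,v}}"
    and IH: "\<And>E'. card E' < card E \<Longrightarrow> finite E' \<Longrightarrow> bip X E' \<Longrightarrow>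
        \<exists>M C. matching E' M \<and> cover E' C \<and> finite C \<and> card C \<le> card M"
  shows "\<exists>M C. matching E M \<and> cover E C \<and> finite C \<and> card C \<le> card M"
proof -
  define E' where "E' = {e\<in>E. v \<notin> e}"
  have "{u,v} \<notin> E'" unfolding E'_def by simp
  moreover have "E' \<subseteq> E" unfolding E'_def by blast
  ultimately have "E' \<subset> E" using uv(1) by blast
  then have "card E' < card E" using fin psubset_card_mono by blast
  moreover have "finite E'" using fin E'_def by simp
  moreover have "bip X E'" using bp E'_def unfolding bip_def by blast
  ultimately obtain M' C' where MC: "matching E' M'" "cover E' C'" "finite C'" "card C' \<le> card M'"
    using IH by blast
  have finM: "finite M'" using MC(1) `finite E'` matching_finite by blast
  have disj: "e \<inter> {u,v} = {}" if "e \<in> M'" for e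
  proof -
    have "e \<in> E'" using that MC(1) unfolding matching_def by blast
    then have "v \<notin> e" "e \<in> E" using E'_def by auto
    moreover have "u \<notin> e"
    proof
      assume "u \<in> e" then have "e \<in> {e\<in>E. u \<in> e}" using `e \<in> E` by simp
      then have "e = {u,v}" using S by simp
      then show False using `v \<notin> e` by simp
    qed
    ultimately show ?thesis by blast
  qed
  have notin: "{u,v} \<notin> M'" using disj by blast
  define M where "M = insert {u,v} M'"
  have "matching E M" unfolding M_def matching_def
    using MC(1) uv disj `E' \<subset> E` unfolding matching_def by (auto simp: Int_commute)
  moreover have "card M = card M' + 1" unfolding M_def using finM notin by simp
  moreover define C where "C = insert v C'"
  moreover have "cover E C" unfolding cover_def
  proof
    fix e assume "e \<in> E"
    show "e \<inter> C \<noteq> {}"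
    proof (cases "v \<in> e")
      case True then show ?thesis using C_def by blast
    next
      case False then have "e \<in> E'" using E'_def `e \<in> E` by simp
      then show ?thesis using MC(2) C_def unfolding cover_def by blast
    qed
  qed
  moreover have "card C \<le> card C' + 1" unfolding C_def using MC(3) card_insert_le
    by (simp add: card_insert_if)
  ultimately show ?thesis using MC(3,4) C_def by (metis add_le_mono1 finite_insert le_trans)
qed



lemma case2:
  assumes fin: "finite E" and bp: "bip X E" and uv: "{u,v} \<in> E" "u \<noteq> v"
    and ux: "{u,x} \<in> E" "u \<noteq> x" "v \<noteq> x"
    and S: "{e\<in>E. u \<in> e} = {{u,v},{u,x}}"
    and IH: "\<And>E'. card E' < card E \<Longrightarrow> finite E' \<Longrightarrow> bip X E' \<Longrightarrow>
        \<exists>M C. matching E' M \<and> cover E' C \<and> finite C \<and> card C \<le> card M"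
  shows "\<exists>M C. matching E M \<and> cover E C \<and> finite C \<and> card C \<le> card M"
proof -
  have side: "v \<in> X \<longleftrightarrow> x \<in> X"
  proof -
    obtain a b where "{u,v} = {a,b}" "a \<in> X" "b \<notin> X" using bp uv unfolding bip_def by blast
    then have 1: "v \<in> X \<longleftrightarrow> u \<notin> X" by (auto simp: doubleton_eq_iff)
    obtain a b where "{u,x} = {a,b}" "a \<in> X" "b \<notin> X" using bp ux unfolding bip_def by blast
    then have 2: "x \<in> X \<longleftrightarrow> u \<notin> X" by (auto simp: doubleton_eq_iff)
    show ?thesis using 1 2 by simp
  qed
  have novx: "e \<in> E \<Longrightarrow> v \<in> e \<Longrightarrow> x \<in> e \<Longrightarrow> False" for e
  proof -
    assume "e \<in> E" "v \<in> e" "x \<in> e"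
    then obtain a b where "e = {a,b}" "a \<in> X" "b \<notin> X" using bp unfolding bip_def by blast
    then show False using side `v \<in> e` `x \<in> e` ux(3) by auto
  qed
  define \<rho> where "\<rho> y = (if y = x then v else y)" for y
  define E0 where "E0 = {e\<in>E. u \<notin> e}"
  define E' where "E' = (\<lambda>e. \<rho> ` e) ` E0"
  have "{u,v} \<notin> E0" unfolding E0_def by simp
  moreover have "E0 \<subseteq> E" unfolding E0_def by blast
  ultimately have "E0 \<subset> E" using uv(1) by blast
  then have "card E0 < card E" using fin psubset_card_mono by blast
  then have "card E' < card E" unfolding E'_def using card_image_le fin E0_def
    by (metis (no_types, lifting) finite_subset le_less_trans mem_Collect_eq subsetI)
  moreover have "finite E'" using fin E0_def E'_def by simp
  moreover have "bip X E'" unfolding bip_def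
  proof
    fix e' assume "e' \<in> E'"
    then obtain e where e: "e \<in> E0" "e' = \<rho> ` e" using E'_def by blast
    then obtain a b where "e = {a,b}" "a \<in> X" "b \<notin> X" using bp E0_def unfolding bip_def by blast
    then show "\<exists>a b. e' = {a, b} \<and> a \<in> X \<and> b \<notin> X" using e side
      by (intro exI[of _ "\<rho> a"] exI[of _ "\<rho> b"]) (auto simp: \<rho>_def)
  qed
  ultimately obtain M' C' where MC: "matching E' M'" "cover E' C'" "finite C'" "card C' \<le> card M'"
    using IH by blast
  have finM': "finite M'" using MC(1) `finite E'` matching_finite by blast
  define pre where "pre e' = (SOME e. e \<in> E0 \<and> \<rho> ` e = e')" for e'
  have pre: "pre e' \<in> E0 \<and> \<rho> ` (pre e') = e'" if "e' \<in> M'" for e'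
  proof -
    have "e' \<in> E'" using that MC(1) unfolding matching_def by blast
    then have "\<exists>e. e \<in> E0 \<and> \<rho> ` e = e'" using E'_def by blast
    then show ?thesis unfolding pre_def by (rule someI_ex)
  qed
  define M0 where "M0 = pre ` M'"
  have injpre: "inj_on pre M'" by (metis inj_onI pre)
  have cM0: "card M0 = card M'" unfolding M0_def using injpre card_image by blast
  have finM0: "finite M0" using finM' M0_def by simp
  have M0: "matching E M0" unfolding matching_def
  proof (intro conjI ballI impI)
    show "M0 \<subseteq> E" using pre M0_def E0_def by auto
  next
    fix e f assume "e \<in> M0" "f \<in> M0" "e \<noteq> f"
    then obtain e' f' where "e' \<in> M'" "f' \<in> M'" "e = pre e'" "f = pre f'" "e' \<noteq> f'"
      using M0_def by blast
    then have "e' \<inter> f' = {}" using MC(1) unfolding matching_def by blast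
    then show "e \<inter> f = {}" using pre `e' \<in> M'` `f' \<in> M'` `e = pre e'` `f = pre f'` by blast
  qed
  have uM0: "u \<notin> \<Union>M0" using pre M0_def E0_def by auto
  have atmost: "g = h" if A: "g \<in> M0" "h \<in> M0" "\<rho> y \<in> \<rho> ` g" "\<rho> y \<in> \<rho> ` h" for g h y
  proof -
    obtain g' h' where "g' \<in> M'" "h' \<in> M'" "g = pre g'" "h = pre h'" using A M0_def by blast
    then have "\<rho> ` g = g'" "\<rho> ` h = h'" using pre by auto
    then have "g' = h'" using A MC(1) `g' \<in> M'` `h' \<in> M'` unfolding matching_def by blast
    then show ?thesis using `g = pre g'` `h = pre h'` by simp
  qed
  have "\<exists>M. matching E M \<and> card M = card M' + 1"
  proof (cases "\<exists>g\<in>M0. v \<in> g")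
    case True
    then obtain g where g: "g \<in> M0" "v \<in> g" by blast
    have xM0: "x \<notin> \<Union>M0"
    proof
      assume "x \<in> \<Union>M0"
      then obtain h where h: "h \<in> M0" "x \<in> h" by blast
      have "\<rho> v \<in> \<rho> ` g" "\<rho> v \<in> \<rho> ` h" using g h by (auto simp: \<rho>_def)
      then have "g = h" using atmost g h by blast
      then show False using novx g h M0 unfolding matching_def by blast
    qed
    have "matching E (insert {u,x} M0)" using M0 uM0 xM0 ux unfolding matching_def by blast
    moreover have "{u,x} \<notin> M0" using uM0 by blast
    ultimately show ?thesis using finM0 cM0 by (intro exI[of _ "insert {u,x} M0"]) simp
  next
    case False
    have "matching E (insert {u,v} M0)" using M0 uM0 False uv unfolding matching_def by blast
    moreover have "{u,v} \<notin> M0" using uM0 by blast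
    ultimately show ?thesis using finM0 cM0 by (intro exI[of _ "insert {u,v} M0"]) simp
  qed
  then obtain M where M: "matching E M" "card M = card M' + 1" by blast
  have "\<exists>C. cover E C \<and> finite C \<and> card C \<le> card C' + 1"
  proof (cases "v \<in> C'")
    case True
    have "cover E (insert x C')" unfolding cover_def
    proof
      fix e assume e: "e \<in> E"
      show "e \<inter> insert x C' \<noteq> {}"
      proof (cases "u \<in> e")
        case True
        then have "e \<in> {{u,v},{u,x}}" using S e by blast
        then show ?thesis using `v \<in> C'` by auto
      next
        case False
        then have "\<rho> ` e \<in> E'" using e E0_def E'_def by blast
        then obtain y where "y \<in> e" "\<rho> y \<in> C'" using MC(2) unfolding cover_def by blast
        then show ?thesis by (cases "y = x") (auto simp: \<rho>_def)
      qed
    qed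
    then show ?thesis using MC(3) by (intro exI[of _ "insert x C'"]) (simp add: card_insert_if)
  next
    case False
    have "cover E (insert u C')" unfolding cover_def
    proof
      fix e assume e: "e \<in> E"
      show "e \<inter> insert u C' \<noteq> {}"
      proof (cases "u \<in> e")
        case True
        then show ?thesis by blast
      next
        case nu: False
        then have "\<rho> ` e \<in> E'" using e E0_def E'_def by blast
        then obtain y where "y \<in> e" "\<rho> y \<in> C'" using MC(2) unfolding cover_def by blast
        then show ?thesis using False by (cases "y = x") (auto simp: \<rho>_def)
      qed
    qed
    then show ?thesis using MC(3) by (intro exI[of _ "insert u C'"]) (simp add: card_insert_if)
  qed
  then obtain C where "cover E C" "finite C" "card C \<le> card C' + 1" by blast
  then show ?thesis using M MC(4) by (intro exI[of _ M] exI[of _ C]) simp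
qed



lemma cover_sub_union:
  assumes "matching E M" "finite C" "\<forall>e\<in>M. e \<inter> C \<noteq> {}" "card C \<le> card M"
  shows "C \<subseteq> \<Union>M"
proof -
  have "matching E M" using assms(1) .
  moreover have "\<forall>e\<in>M. e \<inter> (C \<inter> \<Union>M) \<noteq> {}" using assms(3) by blast
  ultimately have "card M \<le> card (C \<inter> \<Union>M)" using duality[of E M "C \<inter> \<Union>M"] assms(2) by simp
  then have "card C \<le> card (C \<inter> \<Union>M)" using assms(4) by simp
  then have "C \<inter> \<Union>M = C" using assms(2) by (meson Int_lower1 card_seteq)
  then show ?thesis by blast
qed

lemma case3:
  assumes fin: "finite E" and bp: "bip X E" and uv: "{u,v} \<in> E" "u \<noteq> v"
    and S: "card {e\<in>E. u \<in> e} \<ge> 3"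
    and IH: "\<And>E'. card E' < card E \<Longrightarrow> finite E' \<Longrightarrow> bip X E' \<Longrightarrow>
        \<exists>M C. matching E' M \<and> cover E' C \<and> finite C \<and> card C \<le> card M"
  shows "\<exists>M C. matching E M \<and> cover E C \<and> finite C \<and> card C \<le> card M"
proof -
  obtain Mx where Mx: "matching E Mx" "\<forall>M. matching E M \<longrightarrow> card M \<le> card Mx"
    using max_matching_exists fin by blast
  define E1 where "E1 = {e\<in>E. v \<notin> e}"
  have "{u,v} \<notin> E1" unfolding E1_def by simp
  moreover have "E1 \<subseteq> E" unfolding E1_def by blast
  ultimately have "E1 \<subset> E" using uv(1) by blast
  then have "card E1 < card E" using fin psubset_card_mono by blast
  moreover have "finite E1" using fin E1_def by simp
  moreover have "bip X E1" using bp E1_def unfolding bip_def by blast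
  ultimately obtain M1 C1 where MC1: "matching E1 M1" "cover E1 C1" "finite C1" "card C1 \<le> card M1"
    using IH by blast
  have M1E: "matching E M1" using MC1(1) `E1 \<subset> E` unfolding matching_def by blast
  have finM1: "finite M1" using M1E fin matching_finite by blast
  show ?thesis
  proof (cases "card M1 < card Mx")
    case True
    have "cover E (insert v C1)" using MC1(2) unfolding cover_def E1_def by blast
    moreover have "card (insert v C1) \<le> card Mx" using True MC1(3,4)
      by (simp add: card_insert_if)
    ultimately show ?thesis using Mx MC1(3) by blast
  next
    case False
    have vM1: "v \<notin> \<Union>M1" using MC1(1) E1_def unfolding matching_def by blast
    have "u \<in> \<Union>M1"
    proof (rule ccontr)
      assume nu: "u \<notin> \<Union>M1"
      have "matching E (insert {u,v} M1)" using M1E uv nu vM1 unfolding matching_def by blast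
      moreover have "{u,v} \<notin> M1" using vM1 by blast
      ultimately have "card M1 + 1 \<le> card Mx" using Mx(2) finM1 by fastforce
      then show False using False by simp
    qed
    then obtain g where g: "g \<in> M1" "u \<in> g" by blast
    have "g \<noteq> {u,v}" using g vM1 by blast
    have "g \<in> E" using g M1E unfolding matching_def by blast
    define T where "T = {e\<in>E. u \<in> e} - {{u,v}, g}"
    have "card T \<ge> 1"
    proof -
      have "card {e\<in>E. u \<in> e} \<le> card T + card {{u,v}, g}"
      proof -
        have "{e\<in>E. u \<in> e} \<subseteq> T \<union> {{u,v}, g}" unfolding T_def by blast
        moreover have "finite T" unfolding T_def using fin by simp
        ultimately have "card {e\<in>E. u \<in> e} \<le> card (T \<union> {{u,v}, g})" by (simp add: card_mono)
        also have "\<dots> \<le> card T + card {{u,v}, g}" by (rule card_Un_le)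
        finally show ?thesis .
      qed
      moreover have "card {{u,v}, g} \<le> 2" by (simp add: card_insert_if)
      ultimately show ?thesis using S by linarith
    qed
    then obtain f where f: "f \<in> T" by (metis card.empty ex_in_conv not_one_le_zero)
    then have fE: "f \<in> E" "u \<in> f" "f \<noteq> {u,v}" "f \<noteq> g" using T_def by auto
    have fM1: "f \<notin> M1" using fE g M1E unfolding matching_def by blast
    define E2 where "E2 = E - {f}"
    have "card E2 < card E" using card_Diff1_less[OF fin fE(1)] E2_def by simp
    moreover have "finite E2" using fin E2_def by simp
    moreover have "bip X E2" using bp E2_def unfolding bip_def by blast
    ultimately obtain M2 C2 where MC2: "matching E2 M2" "cover E2 C2" "finite C2" "card C2 \<le> card M2"
      using IH by blast
    have M2E: "matching E M2" using MC2(1) E2_def unfolding matching_def by blast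
    have "card M2 \<le> card Mx" using Mx(2) M2E by blast
    then have c21: "card C2 \<le> card M1" using False MC2(4) by linarith
    have "M1 \<subseteq> E2" using M1E fM1 E2_def unfolding matching_def by blast
    then have cov1: "\<forall>e\<in>M1. e \<inter> C2 \<noteq> {}" using MC2(2) unfolding cover_def by blast
    have "C2 \<subseteq> \<Union>M1" using cover_sub_union[OF M1E MC2(3) cov1 c21] .
    then have "v \<notin> C2" using vM1 by blast
    moreover have "{u,v} \<in> E2" using uv fE E2_def by auto
    ultimately have "{u,v} \<inter> C2 \<noteq> {}" "v \<notin> C2" using MC2(2) unfolding cover_def by blast+
    then have "u \<in> C2" by auto
    then have "cover E C2" using MC2(2) fE E2_def unfolding cover_def by blast
    then show ?thesis using M2E MC2(3,4) by blast
  qed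
qed



lemma bip_subset: "bip X E \<Longrightarrow> E' \<subseteq> E \<Longrightarrow> bip X E'"
  unfolding bip_def by blast

lemma matching_mono: "matching E' M \<Longrightarrow> E' \<subseteq> E \<Longrightarrow> matching E M"
  unfolding matching_def by blast

lemma koenig:
  assumes "finite E" "bip X E"
  shows "\<exists>M C. matching E M \<and> cover E C \<and> finite C \<and> card C \<le> card M"
  using assms
proof (induction "card E" arbitrary: E rule: less_induct)
  case less
  show ?case
  proof (cases "E = {}")
    case True
    then show ?thesis unfolding matching_def cover_def by auto
  next
    case False
    then obtain e0 where "e0 \<in> E" by blast
    then obtain u v where uv0: "e0 = {u,v}" "u \<in> X" "v \<notin> X"
      using less.prems(2) unfolding bip_def by blast
    then have uv: "{u,v} \<in> E" "u \<noteq> v" using `e0 \<in> E` by auto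
    define S where "S = {e\<in>E. u \<in> e}"
    have finS: "finite S" using less.prems(1) S_def by simp
    have uvS: "{u,v} \<in> S" using uv S_def by simp
    then have cS: "card S \<ge> 1" using finS
      by (metis One_nat_def Suc_leI card_gt_0_iff empty_iff)
    have IH: "\<And>E'. card E' < card E \<Longrightarrow> finite E' \<Longrightarrow> bip X E' \<Longrightarrow>
        \<exists>M C. matching E' M \<and> cover E' C \<and> finite C \<and> card C \<le> card M"
      using less.hyps by blast
    consider "card S = 1" | "card S = 2" | "card S \<ge> 3" using cS by linarith
    then show ?thesis
    proof cases
      case 1
      then have "S = {{u,v}}" using uvS by (metis card_1_singletonE singletonD)
      then show ?thesis using case1[OF less.prems uv _ IH] S_def by blast
    next
      case 2
      then obtain p q where pq: "S = {p,q}" "p \<noteq> q" by (auto simp: card_2_iff)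
      then obtain f where SS: "S = {{u,v}, f}" and f: "f \<in> S" "f \<noteq> {u,v}"
        using uvS by (auto simp: doubleton_eq_iff)
      have "f \<in> E" "u \<in> f" using f S_def by auto
      then obtain a b where ab: "f = {a,b}" "a \<in> X" "b \<notin> X" using less.prems(2) unfolding bip_def by blast
      then obtain x where fx: "f = {u,x}" "u \<noteq> x" using `u \<in> f` by auto
      then have "v \<noteq> x" using f by auto
      moreover have "{u,x} \<in> E" using fx `f \<in> E` by simp
      moreover have "{e\<in>E. u \<in> e} = {{u,v},{u,x}}" using SS S_def fx by simp
      ultimately show ?thesis using case2[OF less.prems uv _ fx(2) _ _ IH] by blast
    next
      case 3
      then show ?thesis using case3[OF less.prems uv _ IH] S_def by blast
    qed
  qed
qed



lemma lg_edge: "{a,b} \<in> line_graph_edges E \<longleftrightarrow> a \<in> E \<and> b \<in> E \<and> a \<noteq> b \<and> a \<inter> b \<noteq> {}"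
  unfolding line_graph_edges_def by (auto simp: doubleton_eq_iff)

lemma indep_iff: "independent_set E (line_graph_edges E) S \<longleftrightarrow> matching E S"
  unfolding independent_set_def matching_def lg_edge by blast

lemma maxindep_iff: "maximal_independent_set E (line_graph_edges E) S \<longleftrightarrow> maximal_matching E S"
  unfolding maximal_independent_set_def maximal_matching_def indep_iff by blast

lemma clique_iff: "clique E (line_graph_edges E) C \<longleftrightarrow> C \<subseteq> E \<and> (\<forall>a\<in>C. \<forall>b\<in>C. a \<noteq> b \<longrightarrow> a \<inter> b \<noteq> {})"
  unfolding clique_def lg_edge by blast

lemma strong_iff: "strong_clique E (line_graph_edges E) C \<longleftrightarrow>
   C \<subseteq> E \<and> (\<forall>a\<in>C. \<forall>b\<in>C. a \<noteq> b \<longrightarrow> a \<inter> b \<noteq> {}) \<and> (\<forall>M. maximal_matching E M \<longrightarrow> C \<inter> M \<noteq> {})"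
  unfolding strong_clique_def clique_iff maxindep_iff by blast

lemma star_full:
  assumes "finite E" "strong_clique E (line_graph_edges E) C" "C \<subseteq> {e\<in>E. a \<in> e}"
  shows "C = {e\<in>E. a \<in> e}"
proof -
  have "h \<in> C" if h: "h \<in> E" "a \<in> h" for h
  proof (rule ccontr)
    assume "h \<notin> C"
    have "matching E {h}" using h unfolding matching_def by blast
    then obtain M where M: "maximal_matching E M" "h \<in> M" using extend_maximal assms(1) by blast
    then obtain g where "g \<in> C" "g \<in> M" using assms(2) unfolding strong_iff by blast
    then have "a \<in> g" "g \<noteq> h" using assms(3) `h \<notin> C` by auto
    then show False using M `g \<in> M` h unfolding maximal_matching_def matching_def by blast
  qed
  then show ?thesis using assms(3) by blast
qed

lemma two_set: assumes "simple_graph V E" "e \<in> E" "b \<in> e" "c \<in> e" "b \<noteq> c" shows "e = {b,c}"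
proof -
  obtain p q where "e = {p,q}" using assms(1,2) unfolding simple_graph_def by blast
  then show ?thesis using assms(3-5) by auto
qed

lemma edge_sub: assumes "simple_graph V E" "e \<in> E" shows "e \<subseteq> V"
proof -
  obtain p q where "p \<in> V" "q \<in> V" "e = {p,q}" using assms unfolding simple_graph_def by blast
  then show ?thesis by simp
qed

lemma finE: assumes "simple_graph V E" shows "finite E"
proof -
  have "E \<subseteq> Pow V" using assms unfolding simple_graph_def by fastforce
  moreover have "finite V" using assms unfolding simple_graph_def by blast
  ultimately show ?thesis using finite_subset by blast
qed

lemma strong_is_star:
  assumes sg: "simple_graph V E" and tf: "triangle_free V E"
    and C: "strong_clique E (line_graph_edges E) C" "C \<noteq> {}"
  shows "\<exists>a\<in>V. C = {e\<in>E. a \<in> e}"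
proof -
  have finE: "finite E" using finE[OF sg] .
  have cl: "C \<subseteq> E" "\<forall>a\<in>C. \<forall>b\<in>C. a \<noteq> b \<longrightarrow> a \<inter> b \<noteq> {}" using C(1) unfolding strong_iff by auto
  obtain e where e: "e \<in> C" using C(2) by blast
  then obtain a b where ab: "a \<in> V" "b \<in> V" "a \<noteq> b" "e = {a,b}" using sg cl unfolding simple_graph_def by blast
  show ?thesis
  proof (cases "C \<subseteq> {e\<in>E. a \<in> e}")
    case True then show ?thesis using star_full[OF finE C(1)] ab(1) by blast
  next
    case Fa: False
    show ?thesis
    proof (cases "C \<subseteq> {e\<in>E. b \<in> e}")
      case True then show ?thesis using star_full[OF finE C(1)] ab(2) by blast
    next
      case False
      then obtain g where g: "g \<in> C" "b \<notin> g" using cl by blast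
      obtain f where f: "f \<in> C" "a \<notin> f" using Fa cl by blast
      have "f \<noteq> e" using f ab by auto
      then have "f \<inter> e \<noteq> {}" using cl f e by blast
      then have "b \<in> f" using f ab by auto
      have "g \<noteq> e" using g ab by auto
      then have "g \<inter> e \<noteq> {}" using cl g e by blast
      then have "a \<in> g" using g ab by auto
      then have "f \<noteq> g" using f by blast
      then obtain c where c: "c \<in> f" "c \<in> g" using cl f g by blast
      have "c \<noteq> a" "c \<noteq> b" using c f g by auto
      have fE: "f \<in> E" "g \<in> E" using f g cl by auto
      have "f = {b,c}" using two_set[OF sg fE(1) `b \<in> f` c(1)] `c \<noteq> b` by simp
      moreover have "g = {a,c}" using two_set[OF sg fE(2) `a \<in> g` c(2)] `c \<noteq> a` by simp
      moreover have "c \<in> V" using edge_sub[OF sg fE(1)] c by blast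
      moreover have "{a,b} \<in> E" using ab e cl by blast
      ultimately have "{a,b} \<in> E \<and> {b,c} \<in> E \<and> {a,c} \<in> E" using fE by simp
      then show ?thesis using tf ab(1,2) `c \<in> V` unfolding triangle_free_def by blast
    qed
  qed
qed




lemma forward:
  assumes sg: "simple_graph V E" and tf: "triangle_free V E"
    and loc: "localizable E (line_graph_edges E)"
  shows "bipartite V E \<and> equimatchable E"
proof -
  have fin: "finite E" using finE sg .
  obtain P where P: "\<Union>P = E" "{} \<notin> P" "\<forall>A\<in>P. \<forall>B\<in>P. A \<noteq> B \<longrightarrow> A \<inter> B = {}"
    "\<forall>C\<in>P. strong_clique E (line_graph_edges E) C"
    using loc unfolding localizable_def by blast
  have "\<forall>C\<in>P. \<exists>a. a \<in> V \<and> C = {e\<in>E. a \<in> e}"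
    using strong_is_star[OF sg tf] P(2,4) by metis
  then obtain cen where cen: "\<And>C. C \<in> P \<Longrightarrow> cen C \<in> V \<and> C = {e\<in>E. cen C \<in> e}" by metis
  have h1: "cen ` P \<union> (V - cen ` P) = V" using cen by blast
  have h2: "cen ` P \<inter> (V - cen ` P) = {}" by blast
  have h3: "\<forall>e\<in>E. \<exists>x\<in>cen ` P. \<exists>y\<in>V - cen ` P. e = {x, y}"
  proof
    fix e assume e: "e \<in> E"
    then obtain C where C: "C \<in> P" "e \<in> C" using P(1) by blast
    then have ce: "cen C \<in> e" using cen by blast
    obtain p q where pq: "p \<in> V" "q \<in> V" "p \<noteq> q" "e = {p,q}" using sg e unfolding simple_graph_def by blast
    then obtain y where y: "e = {cen C, y}" "y \<noteq> cen C" "y \<in> V" using ce by auto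
    have "y \<notin> cen ` P"
    proof
      assume "y \<in> cen ` P"
      then obtain D where D: "D \<in> P" "y = cen D" by blast
      then have "e \<in> D" using cen[OF D(1)] y e by blast
      then have "C = D" using P(3) C D by blast
      then show False using y D by simp
    qed
    then show "\<exists>x\<in>cen ` P. \<exists>y\<in>V - cen ` P. e = {x, y}" using y C(1) by blast
  qed
  have bip: "bipartite V E" unfolding bipartite_def
    apply (rule exI[of _ "cen ` P"], rule exI[of _ "V - cen ` P"])
    using h1 h2 h3 by blast
  have cardM: "card M = card P" if M: "maximal_matching E M" for M
  proof -
    have mt: "matching E M" using M unfolding maximal_matching_def by blast
    have ne: "C \<inter> M \<noteq> {}" if "C \<in> P" for C using P(4) that M unfolding strong_iff by blast
    define g where "g C = (SOME e. e \<in> C \<inter> M)" for C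
    have g: "g C \<in> C \<inter> M" if "C \<in> P" for C using ne[OF that] unfolding g_def
      by (metis all_not_in_conv someI_ex)
    have "bij_betw g P M" unfolding bij_betw_def
    proof
      show "inj_on g P"
      proof (rule inj_onI)
        fix C D assume "C \<in> P" "D \<in> P" "g C = g D"
        then have "g C \<in> C \<inter> D" using g[of C] g[of D] by simp
        then have "C \<inter> D \<noteq> {}" by blast
        then show "C = D" using P(3) `C \<in> P` `D \<in> P` by metis
      qed
      show "g ` P = M"
      proof
        show "g ` P \<subseteq> M" using g by blast
        show "M \<subseteq> g ` P"
        proof
          fix e assume "e \<in> M"
          then have "e \<in> E" using mt unfolding matching_def by blast
          then obtain C where C: "C \<in> P" "e \<in> C" using P(1) by blast
          have "cen C \<in> e" "cen C \<in> g C" using cen[OF C(1)] C g[OF C(1)] by auto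
          then have "e = g C" using mt `e \<in> M` g[OF C(1)] unfolding matching_def by blast
          then show "e \<in> g ` P" using C by blast
        qed
      qed
    qed
    then show ?thesis by (simp add: bij_betw_same_card)
  qed
  have "equimatchable E" unfolding equimatchable_def using cardM by simp
  then show ?thesis using bip by blast
qed

lemma backward:
  assumes sg: "simple_graph V E" and bp: "bipartite V E" and eq: "equimatchable E"
  shows "localizable E (line_graph_edges E)"
proof -
  have fin: "finite E" using finE sg .
  have finV: "finite V" using sg unfolding simple_graph_def by blast
  have EV: "e \<subseteq> V" if "e \<in> E" for e using edge_sub[OF sg that] .
  obtain X Y where XY: "X \<union> Y = V" "X \<inter> Y = {}" "\<forall>e\<in>E. \<exists>x\<in>X. \<exists>y\<in>Y. e = {x, y}"
    using bp unfolding bipartite_def by blast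
  have "bip X E" unfolding bip_def
  proof
    fix e assume "e \<in> E"
    then obtain x y where "x \<in> X" "y \<in> Y" "e = {x,y}" using XY(3) by blast
    moreover then have "y \<notin> X" using XY(2) by blast
    ultimately show "\<exists>a b. e = {a, b} \<and> a \<in> X \<and> b \<notin> X" by blast
  qed
  then obtain M0 C0 where MC: "matching E M0" "cover E C0" "finite C0" "card C0 \<le> card M0"
    using koenig fin by blast
  define C where "C = C0 \<inter> V"
  have finC: "finite C" using finV C_def by simp
  have cov: "\<forall>e\<in>E. e \<inter> C \<noteq> {}" using MC(2) EV unfolding cover_def C_def by blast
  have "card C \<le> card M0" using MC(3,4) C_def by (meson card_mono inf_le1 le_trans)
  obtain M1 where M1: "maximal_matching E M1" "M0 \<subseteq> M1" using extend_maximal fin MC(1) by blast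
  have m1: "matching E M1" using M1 unfolding maximal_matching_def by blast
  have "card M1 \<le> card C" using duality[OF m1 finC] cov m1 unfolding matching_def by blast
  moreover have "card M0 \<le> card M1" using M1(2) m1 fin matching_finite card_mono by blast
  ultimately have k: "card M1 = card C" using `card C \<le> card M0` by linarith
  have allk: "card M = card C" if "maximal_matching E M" for M
    using eq that M1(1) k unfolding equimatchable_def by metis
  have noboth: False if e: "e \<in> E" "a \<in> e" "b \<in> e" "a \<noteq> b" "a \<in> C" "b \<in> C" for e a b
  proof -
    have "matching E {e}" using e unfolding matching_def by blast
    then obtain N where N: "maximal_matching E N" "e \<in> N" using extend_maximal fin by blast
    have mN: "matching E N" using N unfolding maximal_matching_def by blast
    have mN': "matching E (N - {e})" using mN unfolding matching_def by blast
    have "\<forall>f\<in>N - {e}. f \<inter> (C - {a,b}) \<noteq> {}"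
    proof
      fix f assume f: "f \<in> N - {e}"
      then have "f \<inter> e = {}" using mN N(2) unfolding matching_def by blast
      moreover have "f \<inter> C \<noteq> {}" using cov f mN unfolding matching_def by blast
      ultimately show "f \<inter> (C - {a,b}) \<noteq> {}" using e by blast
    qed
    then have "card (N - {e}) \<le> card (C - {a,b})" using duality[OF mN'] finC by blast
    moreover have "card (N - {e}) + 1 = card N" using N(2) mN fin matching_finite
      by (metis card_Suc_Diff1 Suc_eq_plus1)
    moreover have "card (C - {a,b}) + 2 = card C"
    proof -
      have sub: "{a,b} \<subseteq> C" using e by blast
      have c2: "card {a,b} = 2" using e(4) by simp
      have "card (C - {a,b}) = card C - 2" using card_Diff_subset[OF _ sub] c2 by simp
      moreover have "2 \<le> card C" using card_mono[OF finC sub] c2 by simp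
      ultimately show ?thesis by simp
    qed
    ultimately show False using allk[OF N(1)] by linarith
  qed
  define P where "P = (\<lambda>c. {e\<in>E. c \<in> e}) ` C - {{}}"
  show ?thesis unfolding localizable_def
  proof (intro exI[of _ P] conjI ballI impI)
    show "\<Union>P = E" unfolding P_def using cov by blast
    show "{} \<notin> P" unfolding P_def by blast
  next
    fix A B assume "A \<in> P" "B \<in> P" "A \<noteq> B"
    then obtain c d where cd: "c \<in> C" "d \<in> C" "A = {e\<in>E. c \<in> e}" "B = {e\<in>E. d \<in> e}"
      unfolding P_def by blast
    then have "c \<noteq> d" using `A \<noteq> B` by blast
    then show "A \<inter> B = {}" using cd noboth by blast
  next
    fix A assume "A \<in> P"
    then obtain c where c: "c \<in> C" "A = {e\<in>E. c \<in> e}" unfolding P_def by blast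
    show "strong_clique E (line_graph_edges E) A" unfolding strong_iff
    proof (intro conjI ballI impI allI)
      show "A \<subseteq> E" using c by blast
    next
      fix a b assume "a \<in> A" "b \<in> A" "a \<noteq> b"
      then show "a \<inter> b \<noteq> {}" using c by blast
    next
      fix M assume M: "maximal_matching E M"
      show "A \<inter> M \<noteq> {}"
      proof
        assume none: "A \<inter> M = {}"
        have mM: "matching E M" using M unfolding maximal_matching_def by blast
        have "\<forall>f\<in>M. f \<inter> (C - {c}) \<noteq> {}"
        proof
          fix f assume f: "f \<in> M"
          then have "f \<in> E" using mM unfolding matching_def by blast
          then have "c \<notin> f" using none c f by blast
          then show "f \<inter> (C - {c}) \<noteq> {}" using cov `f \<in> E` by blast
        qed
        then have "card M \<le> card (C - {c})" using duality[OF mM] finC by blast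
        moreover have "card (C - {c}) + 1 = card C" using c(1) finC
          by (metis card_Suc_Diff1 Suc_eq_plus1)
        ultimately show False using allk[OF M] by linarith
      qed
    qed
  qed
qed

theorem mainTheorem18:
  fixes V :: "'a set" and E :: "'a set set"
  assumes "simple_graph V E"
    and "connected_graph V E"
    and "triangle_free V E"
  shows "localizable E (line_graph_edges E) \<longleftrightarrow> bipartite V E \<and> equimatchable E"
  using forward[OF assms(1,3)] backward[OF assms(1)] by blast

end
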